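(* In the standing setup below, assume that the restriction of $h$ to $\Omega$ is one-to-one and $0\notin h(\Omega)$. Let $\gamma\in F$ be such that there is a non-zero vector $v\in\mathcal K_\infty(B,x)$ with $Bv=h(\gamma)v$ and $Av\neq0$. Then $\gamma$ is observable.
   Context: Standing setup. Let $\mathbb G$ be a locally compact abelian group (written additively) with Haar measure $dg$ and Pontryagin dual $\widehat{\mathbb G}$ (the group of continuous unitary characters $\gamma:\mathbb G\to\mathbb T$). A weight is a measurable, locally bounded, even function $w:\mathbb G\to[1,\infty)$ with $w(g_1+g_2)\le w(g_1)w(g_2)$ for all $g_1,g_2$; it is assumed to satisfy the Beurling–Domar condition $\sum_{n=0}^\infty \frac{\ln w(ng)}{1+n^2}<\infty$ for all $g\in\mathbb G$, where $ng=g+\dots+g$ ($n$ times). $L_w(\mathbb G)$ is the Banach algebra of functions $f$ with $\|f\|_w=\int_{\mathbb G}|f(g)|w(g)\,dg<\infty$, with convolution as multiplication, and $\hat f(\gamma)=\int_{\mathbb G}f(g)\gamma(-g)\,dg$. Let $\mathcal X$ be a complex Banach space and $\mathcal T:\mathbb G\to B(\mathcal X)$ a strongly continuous group representation with $\|\mathcal T(g)\|\le w(g)$ for all $g$. $\mathcal X$ is an $L_w(\mathbb G)$-module via $fx=\int_{\mathbb G}f(g)\mathcal T(-g)x\,dg$, assumed non-degenerate ($fx=0$ for all $f$ implies $x=0$). The Beurling spectrum of $N\subseteq\mathcal X$ is $\Lambda(N)=\{\gamma\in\widehat{\mathbb G}:$ for every $f\in L_w(\mathbb G)$ with $\hat f(\gamma)\ne0$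 there is $x\in N$ with $fx\neq0\}$; $\Lambda(x):=\Lambda(\{x\})$. For closed $F\subseteq\widehat{\mathbb G}$, $\mathcal X(F)=\{x\in\mathcal X:\Lambda(x)\subseteq F\}$ and $\mathcal X_\gamma:=\mathcal X(\{\gamma\})$. Fixed data: a set $\Omega\subseteq\widehat{\mathbb G}$ and integers $M,\kappa\ge1$ such that for every $\gamma\in\Omega$, $\mathcal X_\gamma$ has finite dimension $m_\gamma\le M$, with a basis $x_\gamma^1,\dots,x_\gamma^{m_\gamma}$. $F\subseteq\Omega$ is a finite set of cardinality $\kappa$ and $x=\sum_{\gamma\in F}\sum_{m=1}^{m_\gamma}c_{\gamma m}x_\gamma^m$ with $c_{\gamma m}\in\mathbb C$, where for each $\gamma\in F$ some $c_{\gamma m}\ne0$. $A:\mathcal X\to\mathbb C^S$ ($S\in\mathbb N$) is a linear operator and $B=\sum_{n=1}^N b_n\mathcal T(g_n)$ with $g_n\in\mathbb G$, $b_n\in\mathbb C\setminus\{0\}$; set $h(\gamma)=\sum_{n=1}^N b_n\gamma(g_n)$ for $\gamma\in\widehat{\mathbb G}$. The measurements are $y_\ell=AB^\ell x$, $\ell=0,1,2,\dots$. The polynomial $p_{\min}(z)=\sum_{\ell=0}^{\kappa M}\alpha_\ell z^\ell$ has coefficients satisfying $\alpha_{\kappa M}=1$ and $\sum_{\ell=0}^{\kappa M}\alpha_\ell y_{\ell+k}=0$ for all $k=0,1,2,\dots$; if such coefficients are not unique, one chooses those for which the largest possible number of initial coefficients vanish, $\alpha_0=\alpha_1=\dots=\alpha_j=0$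 with $j$ maximal. $R_{\min}$ denotes the set of non-zero roots of $p_{\min}$. The maximal Krylov subspace is $\mathcal K_\infty(B,x)=\mathrm{span}\{x,Bx,B^2x,\dots\}$. A spectral value $\gamma\in F$ is called observable if the restriction of $h$ to $\Omega$ is one-to-one, $0\notin h(\Omega)$, and $h(\gamma)\in R_{\min}$. *)

theory Defs
  imports "HOL-Analysis.Analysis"
begin

text \<open>The group G is a type 'g of class topological_ab_group_add + t2_space, assumed
  locally compact. Haar measure: a nonzero translation invariant Radon measure on the
  Borel sets.\<close>

definition haar_measure :: "('g::{topological_ab_group_add,t2_space}) measure \<Rightarrow> bool" where
  "haar_measure \<mu> \<longleftrightarrow>
     sets \<mu> = sets borel \<and>
     (\<forall>a A. A \<in> sets borel \<longrightarrow> emeasure \<mu> ((\<lambda>g. a + g) ` A) = emeasure \<mu> A) \<and>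
     (\<forall>K. compact K \<longrightarrow> emeasure \<mu> K < \<infinity>) \<and>
     (\<forall>U. open U \<and> U \<noteq> {} \<longrightarrow> emeasure \<mu> U > 0) \<and>
     (\<forall>A \<in> sets borel. emeasure \<mu> A = (INF U \<in> {U. open U \<and> A \<subseteq> U}. emeasure \<mu> U)) \<and>
     (\<forall>U. open U \<longrightarrow> emeasure \<mu> U = (SUP K \<in> {K. compact K \<and> K \<subseteq> U}. emeasure \<mu> K))"

definition character :: "('g::topological_ab_group_add \<Rightarrow> complex) \<Rightarrow> bool" where
  "character \<gamma> \<longleftrightarrow> continuous_on UNIV \<gamma> \<and> (\<forall>a b. \<gamma> (a + b) = \<gamma> a * \<gamma> b)
     \<and> (\<forall>a. cmod (\<gamma> a) = 1)"

definition gmult :: "nat \<Rightarrow> 'g::ab_group_add \<Rightarrow> 'g" where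
  "gmult n g = (\<Sum>i<n. g)"

definition weight :: "('g::{topological_ab_group_add,t2_space} \<Rightarrow> real) \<Rightarrow> bool" where
  "weight w \<longleftrightarrow> w \<in> borel_measurable borel \<and>
     (\<forall>K. compact K \<longrightarrow> bounded (w ` K)) \<and>
     (\<forall>g. w (- g) = w g) \<and> (\<forall>g. 1 \<le> w g) \<and>
     (\<forall>g1 g2. w (g1 + g2) \<le> w g1 * w g2) \<and>
     (\<forall>g. summable (\<lambda>n. ln (w (gmult n g)) / (1 + (real n)\<^sup>2)))"

definition Lw :: "'g measure \<Rightarrow> ('g \<Rightarrow> real) \<Rightarrow> ('g \<Rightarrow> complex) set" where
  "Lw \<mu> w = {f. f \<in> borel_measurable \<mu> \<and> integrable \<mu> (\<lambda>g. cmod (f g) * w g)}"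

definition fourier :: "('g::ab_group_add) measure \<Rightarrow> ('g \<Rightarrow> complex) \<Rightarrow> ('g \<Rightarrow> complex) \<Rightarrow> complex" where
  "fourier \<mu> f \<gamma> = (\<integral>g. f g * \<gamma> (- g) \<partial>\<mu>)"

text \<open>A complex Banach space: a (real) Banach space type 'x together with a complex scalar
  multiplication smc extending the real one and compatible with the norm.\<close>
definition complex_banach :: "(complex \<Rightarrow> 'x::banach \<Rightarrow> 'x) \<Rightarrow> bool" where
  "complex_banach smc \<longleftrightarrow> vector_space smc \<and>
     (\<forall>r u. smc (complex_of_real r) u = r *\<^sub>R u) \<and>
     (\<forall>c u. norm (smc c u) = cmod c * norm u)"

definition representation ::
  "(complex \<Rightarrow> 'x::banach \<Rightarrow> 'x) \<Rightarrow> ('g::{topological_ab_group_add} \<Rightarrow> real)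
     \<Rightarrow> ('g \<Rightarrow> 'x \<Rightarrow> 'x) \<Rightarrow> bool" where
  "representation smc w T \<longleftrightarrow>
     (\<forall>g. bounded_linear (T g) \<and> (\<forall>c u. T g (smc c u) = smc c (T g u))) \<and>
     T 0 = id \<and> (\<forall>a b. T (a + b) = T a \<circ> T b) \<and>
     (\<forall>u. continuous_on UNIV (\<lambda>g. T g u)) \<and>
     (\<forall>g u. norm (T g u) \<le> w g * norm u)"

text \<open>Module action f x = integral of f(g) T(-g)x dg, taken as a (weak) vector integral:
  the unique vector whose image under every bounded (real-)linear functional is the
  integral of the image.\<close>
definition act :: "'g::ab_group_add measure \<Rightarrow> (complex \<Rightarrow> 'x::banach \<Rightarrow> 'x)
     \<Rightarrow> ('g \<Rightarrow> 'x \<Rightarrow> 'x) \<Rightarrow> ('g \<Rightarrow> complex) \<Rightarrow> 'x \<Rightarrow> 'x" where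
  "act \<mu> smc T f u = (THE y. \<forall>\<phi>::'x \<Rightarrow> real. bounded_linear \<phi> \<longrightarrow>
       \<phi> y = (\<integral>g. \<phi> (smc (f g) (T (- g) u)) \<partial>\<mu>))"

definition nondegenerate where
  "nondegenerate \<mu> w smc T \<longleftrightarrow> (\<forall>u. (\<forall>f \<in> Lw \<mu> w. act \<mu> smc T f u = 0) \<longrightarrow> u = 0)"

definition beurling_spectrum where
  "beurling_spectrum \<mu> w smc T N = {\<gamma>. character \<gamma> \<and>
     (\<forall>f \<in> Lw \<mu> w. fourier \<mu> f \<gamma> \<noteq> 0 \<longrightarrow> (\<exists>u \<in> N. act \<mu> smc T f u \<noteq> 0))}"

definition spectral_subspace where
  "spectral_subspace \<mu> w smc T Fs = {u. beurling_spectrum \<mu> w smc T {u} \<subseteq> Fs}"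

definition Bop :: "(complex \<Rightarrow> 'x \<Rightarrow> 'x) \<Rightarrow> ('g \<Rightarrow> 'x \<Rightarrow> 'x) \<Rightarrow> (nat \<Rightarrow> complex)
     \<Rightarrow> (nat \<Rightarrow> 'g) \<Rightarrow> nat \<Rightarrow> 'x \<Rightarrow> ('x::comm_monoid_add)" where
  "Bop smc T b gs N u = (\<Sum>n = 1..N. smc (b n) (T (gs n) u))"

definition hfun :: "(nat \<Rightarrow> complex) \<Rightarrow> (nat \<Rightarrow> 'g) \<Rightarrow> nat \<Rightarrow> ('g \<Rightarrow> complex) \<Rightarrow> complex" where
  "hfun b gs N \<gamma> = (\<Sum>n = 1..N. b n * \<gamma> (gs n))"

definition krylov :: "(complex \<Rightarrow> 'x \<Rightarrow> 'x) \<Rightarrow> ('x \<Rightarrow> 'x) \<Rightarrow> 'x \<Rightarrow> ('x::ab_group_add) set" where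
  "krylov smc B x = module.span smc (range (\<lambda>l. (B ^^ l) x))"

definition pmin_admissible :: "(nat \<Rightarrow> complex ^ 's) \<Rightarrow> nat \<Rightarrow> (nat \<Rightarrow> complex) \<Rightarrow> bool" where
  "pmin_admissible y d \<beta> \<longleftrightarrow> \<beta> d = 1 \<and> (\<forall>k. (\<Sum>l = 0..d. \<beta> l *s y (l + k)) = 0)"

text \<open>The chosen coefficients: admissible, and with the largest possible block of
  vanishing initial coefficients among all admissible ones.\<close>
definition pmin_coeffs :: "(nat \<Rightarrow> complex ^ 's) \<Rightarrow> nat \<Rightarrow> (nat \<Rightarrow> complex) \<Rightarrow> bool" where
  "pmin_coeffs y d \<alpha> \<longleftrightarrow> pmin_admissible y d \<alpha> \<and>
     (\<forall>\<beta>. pmin_admissible y d \<beta> \<longrightarrow>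
        (\<forall>j \<le> d. (\<forall>i \<le> j. \<beta> i = 0) \<longrightarrow> (\<forall>i \<le> j. \<alpha> i = 0)))"

definition Rmin :: "(nat \<Rightarrow> complex) \<Rightarrow> nat \<Rightarrow> complex set" where
  "Rmin \<alpha> d = {z. z \<noteq> 0 \<and> (\<Sum>l = 0..d. \<alpha> l * z ^ l) = 0}"

definition observable where
  "observable F \<Omega> h \<alpha> d \<gamma> \<longleftrightarrow> \<gamma> \<in> F \<and> inj_on h \<Omega> \<and> 0 \<notin> h ` \<Omega> \<and> h \<gamma> \<in> Rmin \<alpha> d"

end

theory Submission
  imports Defs
begin

theorem proposition2p3:
  fixes \<mu> :: "('g::{topological_ab_group_add,t2_space}) measure"
    and w :: "'g \<Rightarrow> real"
    and smc :: "complex \<Rightarrow> 'x::banach \<Rightarrow> 'x"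
    and T :: "'g \<Rightarrow> 'x \<Rightarrow> 'x"
    and \<Omega> F :: "('g \<Rightarrow> complex) set"
    and M \<kappa> N :: nat
    and m :: "('g \<Rightarrow> complex) \<Rightarrow> nat"
    and xb :: "('g \<Rightarrow> complex) \<Rightarrow> nat \<Rightarrow> 'x"
    and c :: "('g \<Rightarrow> complex) \<Rightarrow> nat \<Rightarrow> complex"
    and x v :: 'x
    and A :: "'x \<Rightarrow> complex ^ 's::finite"
    and b :: "nat \<Rightarrow> complex"
    and gs :: "nat \<Rightarrow> 'g"
    and \<alpha> :: "nat \<Rightarrow> complex"
    and \<gamma> :: "'g \<Rightarrow> complex"
  assumes lc: "locally_compact_space (euclidean :: 'g topology)"
    and haar: "haar_measure \<mu>"
    and wt: "weight w"
    and cb: "complex_banach smc"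
    and rep: "representation smc w T"
    and nondeg: "nondegenerate \<mu> w smc T"
    and \<Omega>_dual: "\<Omega> \<subseteq> {\<eta>. character \<eta>}"
    and M_pos: "M \<ge> 1" and \<kappa>_pos: "\<kappa> \<ge> 1"
    and basis: "\<forall>\<eta> \<in> \<Omega>. m \<eta> \<le> M \<and>
                 vector_space.dim smc (spectral_subspace \<mu> w smc T {\<eta>}) = m \<eta> \<and>
                 inj_on (xb \<eta>) {1..m \<eta>} \<and>
                 \<not> module.dependent smc (xb \<eta> ` {1..m \<eta>}) \<and>
                 module.span smc (xb \<eta> ` {1..m \<eta>}) = spectral_subspace \<mu> w smc T {\<eta>}"
    and F_sub: "F \<subseteq> \<Omega>" and F_fin: "finite F" and F_card: "card F = \<kappa>"
    and x_def: "x = (\<Sum>\<eta>\<in>F. \<Sum>k = 1..m \<eta>. smc (c \<eta> k) (xb \<eta> k))"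
    and c_nz: "\<forall>\<eta> \<in> F. \<exists>k \<in> {1..m \<eta>}. c \<eta> k \<noteq> 0"
    and A_lin: "Vector_Spaces.linear smc (*s) A"
    and b_nz: "\<forall>n \<in> {1..N}. b n \<noteq> 0"
    and pmin: "pmin_coeffs (\<lambda>l. A ((Bop smc T b gs N ^^ l) x)) (\<kappa> * M) \<alpha>"
    and h_inj: "inj_on (hfun b gs N) \<Omega>"
    and h_nz: "0 \<notin> hfun b gs N ` \<Omega>"
    and \<gamma>F: "\<gamma> \<in> F"
    and vK: "v \<in> krylov smc (Bop smc T b gs N) x"
    and v_nz: "v \<noteq> 0"
    and v_eig: "Bop smc T b gs N v = smc (hfun b gs N \<gamma>) v"
    and Av: "A v \<noteq> 0"
  shows "observable F \<Omega> (hfun b gs N) \<alpha> (\<kappa> * M) \<gamma>"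
proof -
  interpret vs: vector_space smc using cb unfolding complex_banach_def by auto
  have Alin: "\<And>u w. A (u + w) = A u + A w" "\<And>a u. A (smc a u) = a *s A u"
    using module_hom.add[OF A_lin[unfolded linear_iff_module_hom]]
      module_hom.scale[OF A_lin[unfolded linear_iff_module_hom]] by auto
  define B where "B = Bop smc T b gs N"
  define lam where "lam = hfun b gs N \<gamma>"
  have Tadd: "\<And>g u w. T g (u + w) = T g u + T g w"
    using rep unfolding representation_def by (auto intro: linear_add bounded_linear.linear)
  have Tsc: "\<And>g a u. T g (smc a u) = smc a (T g u)"
    using rep unfolding representation_def by auto
  have Badd: "\<And>u w. B (u + w) = B u + B w"
    unfolding B_def Bop_def by (simp add: Tadd vs.scale_right_distrib sum.distrib)
  have Bsc: "\<And>a u. B (smc a u) = smc a (B u)"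
    unfolding B_def Bop_def by (simp add: Tsc vs.scale_sum_right mult.commute)
  have Bnadd: "\<And>n u w. (B ^^ n) (u + w) = (B ^^ n) u + (B ^^ n) w"
  proof -
    fix n u w show "(B ^^ n) (u + w) = (B ^^ n) u + (B ^^ n) w"
      by (induction n) (auto simp: Badd)
  qed
  have Bnsc: "\<And>n a u. (B ^^ n) (smc a u) = smc a ((B ^^ n) u)"
  proof -
    fix n a u show "(B ^^ n) (smc a u) = smc a ((B ^^ n) u)"
      by (induction n) (auto simp: Bsc)
  qed
  have Bn0: "\<And>n. (B ^^ n) 0 = 0"
  proof -
    fix n show "(B ^^ n) 0 = 0" using Bnsc[of n 0 0] by simp
  qed
  have Bneig: "\<And>n. (B ^^ n) v = smc (lam ^ n) v"
  proof -
    fix n show "(B ^^ n) v = smc (lam ^ n) v"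
      by (induction n) (auto simp: v_eig[folded B_def lam_def] Bsc mult.commute)
  qed
  define d where "d = \<kappa> * M"
  have adm: "\<And>k. (\<Sum>l = 0..d. \<alpha> l *s A ((B ^^ (l + k)) x)) = 0"
    using pmin unfolding pmin_coeffs_def pmin_admissible_def B_def d_def by auto
  define Q where "Q u \<longleftrightarrow> (\<forall>k. (\<Sum>l = 0..d. \<alpha> l *s A ((B ^^ (l + k)) u)) = 0)" for u
  have "Q v"
    using vK[folded B_def] unfolding krylov_def
  proof (induction rule: vs.span_induct_alt)
    case base
    have "A 0 = 0" using Alin(2)[of 0 0] by simp
    then show ?case unfolding Q_def by (simp add: Bn0)
  next
    case (step a z y)
    then obtain j where z: "z = (B ^^ j) x" by auto
    have Qz: "(\<Sum>l = 0..d. \<alpha> l *s A ((B ^^ (l + k)) z)) = 0" for k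
    proof -
      have e: "(B ^^ (l + k)) ((B ^^ j) x) = (B ^^ (l + (k + j))) x" for l
        by (simp add: funpow_add add.assoc[symmetric])
      show ?thesis using adm[of "k + j"] unfolding z e .
    qed
    show ?case unfolding Q_def
    proof
      fix k
      have "(\<Sum>l = 0..d. \<alpha> l *s A ((B ^^ (l + k)) (smc a z + y)))
          = a *s (\<Sum>l = 0..d. \<alpha> l *s A ((B ^^ (l + k)) z))
            + (\<Sum>l = 0..d. \<alpha> l *s A ((B ^^ (l + k)) y))"
      proof -
        have t: "\<alpha> l *s A ((B ^^ (l + k)) (smc a z + y)) =
          a *s (\<alpha> l *s A ((B ^^ (l + k)) z)) + \<alpha> l *s A ((B ^^ (l + k)) y)" for l
          by (simp add: Bnadd Bnsc Alin vector_add_ldistrib vector_smult_assoc mult.commute)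
        show ?thesis by (simp only: t sum.distrib vec.scale_sum_right)
      qed
      also have "\<dots> = 0" using Qz step.IH unfolding Q_def by simp
      finally show "(\<Sum>l = 0..d. \<alpha> l *s A ((B ^^ (l + k)) (smc a z + y))) = 0" .
    qed
  qed
  then have "(\<Sum>l = 0..d. \<alpha> l *s A ((B ^^ (l + 0)) v)) = 0"
    unfolding Q_def by blast
  then have "(\<Sum>l = 0..d. \<alpha> l *s A ((B ^^ l) v)) = 0"
    by simp
  then have "(\<Sum>l = 0..d. \<alpha> l * lam ^ l) *s A v = 0"
    by (simp add: Bneig Alin vector_smult_assoc vec.scale_sum_left)
  then have p0: "(\<Sum>l = 0..d. \<alpha> l * lam ^ l) = 0"
    using Av by (metis vector_mul_eq_0)
  have "lam \<in> hfun b gs N ` \<Omega>" using \<gamma>F F_sub unfolding lam_def by blast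
  then have lam0: "lam \<noteq> 0" using h_nz by metis
  have "hfun b gs N \<gamma> \<in> Rmin \<alpha> (\<kappa> * M)"
    unfolding Rmin_def using p0 lam0 unfolding lam_def d_def by blast
  then show ?thesis unfolding observable_def
    using \<gamma>F h_inj h_nz by blast
qed

end
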